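(* Let $\lambda,n_c,g_+,g_->0$ with $n_c<1$, let $c_B>\bar c>0$, and let $$\psi(n)=\begin{cases}\lambda,& n=1,\\ \lambda n_c,& 0<n<1,\\ 0,& n=0,\end{cases}\qquad G(c)=\begin{cases} g_+,& c>\bar c,\\ -g_-,& c<\bar c.\end{cases}$$ Set $\alpha=\sqrt{g_-/(g_++g_-)}\in(0,1)$ and $$\mathcal F(R)=\frac{\bar c}{c_B}\Big(\cosh(\sqrt\lambda R)+\sqrt{n_c}\sinh(\sqrt\lambda R)\Big)-\sqrt{n_c}\sinh\big(\sqrt\lambda(1-\alpha)R\big)-\cosh\big(\sqrt\lambda(1-\alpha)R\big).$$ Then $\mathcal F$ has a unique positive root $R$, and there is a unique monotone traveling wave: a unique pair $\sigma>0$, $R>0$ such that the system (TW-vitro) below admits a nonnegative solution with $c'\ge0$. This $R$ is the unique positive root of $\mathcal F$, and $$\sigma=R\big(\sqrt{(g_++g_-)g_-}-g_-\big).$$ Moreover $\sigma$ increases with respect to $c_B$ and decreases with respect to $\bar c$.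
   Context: System (TW-vitro), with unknowns $\sigma>0$, $R>0$ and functions $n,c,p$ on $\mathbb{R}$: (i) $-\sigma n'=nG(c)$ on $(-\infty,0]$; (ii) $n=1$ on $[0,R]$ and $n=0$ on $(R,+\infty)$; (iii) $c$ is $C^1$ on $(-\infty,R]$ and satisfies $c''=\psi(n)c$ on $(-\infty,R]$, with $c(R)=c_B$ (and $c=c_B$ on $(R,+\infty)$); (iv) $-p''=G(c)$ on $[0,R]$, $p(0)=p(R)=0$, $p\ge 0$, and $p=0$ outside $[0,R]$; (v) jump relations: $\sigma=-p'(R^-)$, $n(0)=1$, $p'(0^+)=0$. The solution $c$ is required to be bounded on $(-\infty,0]$. *)

theory Defs
  imports "HOL-Analysis.Analysis"
begin

text \<open>Consumption rate psi(n): lam for n = 1, lam*nc for 0 < n < 1, 0 for n = 0.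
  (Only used for 0 <= n <= 1, which is part of the system below.)\<close>
definition psi :: "real \<Rightarrow> real \<Rightarrow> real \<Rightarrow> real" where
  "psi lam nc n = (if n = 1 then lam else if 0 < n \<and> n < 1 then lam * nc else 0)"

text \<open>Growth rate G(c): gp for c > cbar, -gm for c < cbar. Its value at c = cbar is
  never used (all equations involving G are only imposed where c differs from cbar).\<close>
definition Gr :: "real \<Rightarrow> real \<Rightarrow> real \<Rightarrow> real \<Rightarrow> real" where
  "Gr gp gm cbar c = (if c > cbar then gp else if c < cbar then - gm else 0)"

definition alpha :: "real \<Rightarrow> real \<Rightarrow> real" where
  "alpha gp gm = sqrt (gm / (gp + gm))"

definition Ffun :: "real \<Rightarrow> real \<Rightarrow> real \<Rightarrow> real \<Rightarrow> real \<Rightarrow> real \<Rightarrow> real \<Rightarrow> real" where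
  "Ffun lam nc gp gm cbar cB R =
     cbar / cB * (cosh (sqrt lam * R) + sqrt nc * sinh (sqrt lam * R))
     - sqrt nc * sinh (sqrt lam * (1 - alpha gp gm) * R)
     - cosh (sqrt lam * (1 - alpha gp gm) * R)"

definition TW_vitro ::
  "real \<Rightarrow> real \<Rightarrow> real \<Rightarrow> real \<Rightarrow> real \<Rightarrow> real \<Rightarrow> real \<Rightarrow> real \<Rightarrow>
   (real \<Rightarrow> real) \<Rightarrow> (real \<Rightarrow> real) \<Rightarrow> (real \<Rightarrow> real) \<Rightarrow> bool" where
  "TW_vitro lam nc gp gm cbar cB \<sigma> R n c p \<longleftrightarrow>
     \<sigma> > 0 \<and> R > 0 \<and>
     \<comment> \<open>n takes values in the domain of psi\<close>
     (\<forall>x. n x \<le> 1) \<and>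
     \<comment> \<open>(i)\<close>
     continuous_on {..0} n \<and>
     (\<forall>x\<le>0. c x \<noteq> cbar \<longrightarrow>
        (n has_real_derivative (- (n x * Gr gp gm cbar (c x)) / \<sigma>)) (at x within {..0})) \<and>
     \<comment> \<open>(ii)\<close>
     (\<forall>x\<in>{0..R}. n x = 1) \<and> (\<forall>x>R. n x = 0) \<and>
     \<comment> \<open>(iii): c is C^1 on (-inf,R], c'' = psi(n) c there (in integrated form)\<close>
     (\<exists>dc. (\<forall>x\<le>R. (c has_real_derivative dc x) (at x within {..R})) \<and>
           continuous_on {..R} dc \<and>
           (\<forall>y x. y \<le> x \<and> x \<le> R \<longrightarrow>
              ((\<lambda>t. psi lam nc (n t) * c t) has_integral (dc x - dc y)) {y..x})) \<and>
     c R = cB \<and> (\<forall>x>R. c x = cB) \<and> bounded (c ` {..0}) \<and>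
     \<comment> \<open>(iv) and (v)\<close>
     (\<exists>dp. (\<forall>x\<in>{0..R}. (p has_real_derivative dp x) (at x within {0..R})) \<and>
           continuous_on {0..R} dp \<and>
           (\<forall>x\<in>{0<..<R}. c x \<noteq> cbar \<longrightarrow>
              (dp has_real_derivative (- Gr gp gm cbar (c x))) (at x)) \<and>
           \<sigma> = - dp R \<and> dp 0 = 0) \<and>
     p 0 = 0 \<and> p R = 0 \<and> (\<forall>x. 0 \<le> p x) \<and> (\<forall>x. x \<notin> {0..R} \<longrightarrow> p x = 0) \<and>
     n 0 = 1"

definition monotone_TW ::
  "real \<Rightarrow> real \<Rightarrow> real \<Rightarrow> real \<Rightarrow> real \<Rightarrow> real \<Rightarrow> real \<Rightarrow> real \<Rightarrow> bool" where
  "monotone_TW lam nc gp gm cbar cB \<sigma> R \<longleftrightarrow>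
     (\<exists>n c p. TW_vitro lam nc gp gm cbar cB \<sigma> R n c p \<and>
        (\<forall>x. 0 \<le> n x \<and> 0 \<le> c x \<and> 0 \<le> p x) \<and>
        (\<forall>x\<le>R. \<forall>d. (c has_real_derivative d) (at x within {..R}) \<longrightarrow> 0 \<le> d))"

end

theory Submission
  imports Defs
begin

lemma const_deriv0:
  fixes f :: "real \<Rightarrow> real"
  assumes "a \<le> b" "continuous_on {a..b} f" "\<And>x. a < x \<Longrightarrow> x < b \<Longrightarrow> DERIV f x :> 0"
  shows "f b = f a"
proof (cases "a = b")
  case False
  then show ?thesis using DERIV_isconst_end[of a b f] assms by auto
qed simp

lemma exp_ode:
  fixes f :: "real \<Rightarrow> real"
  assumes "a \<le> b" "continuous_on {a..b} f" "\<And>x. a < x \<Longrightarrow> x < b \<Longrightarrow> DERIV f x :> k * f x"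
  shows "f b = f a * exp (k * (b - a))"
proof -
  let ?g = "\<lambda>x. f x * exp (- k * x)"
  have "?g b = ?g a"
  proof (rule const_deriv0[OF assms(1)])
    show "continuous_on {a..b} ?g" using assms(2) by (intro continuous_intros) auto
    fix x assume "a < x" "x < b"
    from assms(3)[OF this] have "DERIV ?g x :> k * f x * exp (- k * x) + f x * (exp (- k * x) * (- k))"
      by (auto intro!: derivative_eq_intros)
    then show "DERIV ?g x :> 0" by (simp add: algebra_simps)
  qed
  then have "f b = f a * exp (- k * a) * exp (k * b)"
    by (metis exp_minus_inverse mult.assoc mult.commute mult_minus_left mult.right_neutral)
  moreover have "exp (k * (b - a)) = exp (- k * a) * exp (k * b)"
    by (simp add: algebra_simps flip: exp_add)
  ultimately show ?thesis by (simp add: mult.assoc)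
qed

lemma deriv_Un:
  "(f has_real_derivative D) (at x within S) \<Longrightarrow> (f has_real_derivative D) (at x within T)
   \<Longrightarrow> (f has_real_derivative D) (at x within (S \<union> T))"
  by (simp add: has_field_derivative_iff Lim_within_Un)

lemma within_to_at:
  assumes "(f has_real_derivative D) (at x within S)" "a < x" "x < b" "{a..b} \<subseteq> S"
  shows "DERIV f x :> D"
proof -
  have "(f has_real_derivative D) (at x within {a..b})" using assms DERIV_subset by blast
  moreover have "at x within {a..b} = at x" using assms by (intro at_within_interior) auto
  ultimately show ?thesis by simp
qed

lemma if_deriv_lt:
  fixes f g :: "real \<Rightarrow> real"
  assumes "DERIV f y :> D" "y < a"
  shows "DERIV (\<lambda>x. if x \<le> a then f x else g x) y :> D"
  by (rule has_field_derivative_transform_within_open[OF assms(1), of "{..<a}"]) (use assms in auto)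

lemma if_deriv_gt:
  fixes f g :: "real \<Rightarrow> real"
  assumes "DERIV g y :> D" "a < y"
  shows "DERIV (\<lambda>x. if x \<le> a then f x else g x) y :> D"
  by (rule has_field_derivative_transform_within_open[OF assms(1), of "{a<..}"]) (use assms in auto)

lemma if_deriv_eq:
  fixes f g :: "real \<Rightarrow> real"
  assumes "DERIV f a :> D" "DERIV g a :> D" "f a = g a"
  shows "DERIV (\<lambda>x. if x \<le> a then f x else g x) a :> D"
proof -
  let ?h = "\<lambda>x. if x \<le> a then f x else g x"
  have "(f has_real_derivative D) (at a within {..a})" using assms(1) DERIV_subset by blast
  then have 1: "(?h has_real_derivative D) (at a within {..a})"
    by (rule has_field_derivative_transform_within[where d=1]) auto
  have "(g has_real_derivative D) (at a within {a..})" using assms(2) DERIV_subset by blast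
  then have 2: "(?h has_real_derivative D) (at a within {a..})"
    by (rule has_field_derivative_transform_within[where d=1]) (use assms(3) in auto)
  have "{..a} \<union> {a..} = (UNIV::real set)" by auto
  with deriv_Un[OF 1 2] show ?thesis by simp
qed

lemma L5:
  fixes F f g :: "real \<Rightarrow> real"
  assumes "\<forall>y\<in>{a..b}. (g has_integral (F y - F a)) {a..y}" "\<forall>t\<in>{a..b}. g t = f t"
    "continuous_on {a..b} f" "a < x" "x < b"
  shows "DERIV F x :> f x"
proof -
  have eq: "F y = F a + integral {a..y} f" if "y \<in> {a..b}" for y
  proof -
    have "(g has_integral (F y - F a)) {a..y}" using assms(1) that by auto
    moreover have "\<And>t. t \<in> {a..y} \<Longrightarrow> g t = f t" using assms(2) that by auto
    ultimately have "(f has_integral (F y - F a)) {a..y}" using has_integral_cong[of "{a..y}" g f] by auto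
    then show ?thesis by (simp add: integral_unique)
  qed
  have "((\<lambda>y. F a + integral {a..y} f) has_real_derivative f x) (at x within {a..b})"
    using integral_has_real_derivative[OF assms(3), of x] assms(4,5)
    by (auto intro!: derivative_eq_intros)
  then have "(F has_real_derivative f x) (at x within {a..b})"
    by (rule has_field_derivative_transform_within[where d=1]) (use assms(4,5) in \<open>auto simp: eq[symmetric]\<close>)
  then show ?thesis using within_to_at[of F "f x" x "{a..b}" a b] assms by auto
qed

definition Hh :: "real \<Rightarrow> real \<Rightarrow> real \<Rightarrow> real" where
  "Hh lam nc t = cosh (sqrt lam * t) + sqrt nc * sinh (sqrt lam * t)"
definition Hd :: "real \<Rightarrow> real \<Rightarrow> real \<Rightarrow> real" where
  "Hd lam nc t = sinh (sqrt lam * t) + sqrt nc * cosh (sqrt lam * t)"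

lemma Ffun_eq: "Ffun lam nc gp gm cbar cB R = cbar / cB * Hh lam nc R - Hh lam nc ((1 - alpha gp gm) * R)"
  unfolding Ffun_def Hh_def by (simp add: mult.assoc algebra_simps)

lemma Hh_chain: "DERIV (\<lambda>R. Hh lam nc (a * R)) t :> a * (sqrt lam * Hd lam nc (a * t))"
  unfolding Hh_def Hd_def by (auto intro!: derivative_eq_intros simp: algebra_simps)

lemma Hh_deriv: "DERIV (Hh lam nc) t :> sqrt lam * Hd lam nc t"
  using Hh_chain[of lam nc 1 t] by simp

lemma Hh_pos: "0 \<le> t \<Longrightarrow> 0 \<le> lam \<Longrightarrow> 0 \<le> nc \<Longrightarrow> 0 < Hh lam nc t"
  unfolding Hh_def by (intro add_pos_nonneg) auto

lemma Hd_pos: "0 \<le> t \<Longrightarrow> 0 \<le> lam \<Longrightarrow> 0 < nc \<Longrightarrow> 0 < Hd lam nc t"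
  unfolding Hd_def by (intro add_nonneg_pos) auto

lemma Hh_0 [simp]: "Hh lam nc 0 = 1" by (simp add: Hh_def)

lemma Hh_key:
  assumes "0 \<le> lam" "0 < nc" "nc < 1" "u \<le> v"
  shows "Hd lam nc u * Hh lam nc v \<le> Hh lam nc u * Hd lam nc v"
proof -
  have gen: "(cosh x + q * sinh x) * (sinh y + q * cosh y) - (sinh x + q * cosh x) * (cosh y + q * sinh y)
     = (1 - q * q) * sinh (y - x)" for x y q :: real
    by (simp add: sinh_diff algebra_simps)
  have "Hh lam nc u * Hd lam nc v - Hd lam nc u * Hh lam nc v
        = (1 - (sqrt nc)^2) * sinh (sqrt lam * v - sqrt lam * u)"
    unfolding Hh_def Hd_def power2_eq_square by (rule gen)
  also have "\<dots> \<ge> 0" using assms by (intro mult_nonneg_nonneg) (auto intro: mult_left_mono)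
  finally show ?thesis by simp
qed

lemma ratio_decr:
  assumes "0 < lam" "0 < nc" "nc < 1" "0 < a" "a < 1" "0 \<le> x" "x < y"
  shows "Hh lam nc (a * y) / Hh lam nc y < Hh lam nc (a * x) / Hh lam nc x"
proof (rule DERIV_neg_imp_decreasing[OF assms(7)])
  fix t assume t: "x \<le> t" "t \<le> y"
  then have t0: "0 \<le> t" using assms by auto
  have Hp: "0 < Hh lam nc t" "0 < Hh lam nc (a*t)" using t0 assms by (auto intro!: Hh_pos)
  have Dp: "0 < Hd lam nc (a*t)" using t0 assms by (auto intro!: Hd_pos)
  have der: "DERIV (\<lambda>R. Hh lam nc (a * R) / Hh lam nc R) t :>
     ((a * (sqrt lam * Hd lam nc (a * t))) * Hh lam nc t - Hh lam nc (a*t) * (sqrt lam * Hd lam nc t))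
      / (Hh lam nc t * Hh lam nc t)"
    by (rule DERIV_divide[OF Hh_chain Hh_deriv]) (use Hp in auto)
  have k: "Hd lam nc (a*t) * Hh lam nc t \<le> Hh lam nc (a*t) * Hd lam nc t"
    using assms t0 by (intro Hh_key) (auto simp: mult_left_le_one_le)
  have "a * (Hd lam nc (a*t) * Hh lam nc t) < Hd lam nc (a*t) * Hh lam nc t"
    using assms Hp Dp by simp
  with k have "a * (Hd lam nc (a*t) * Hh lam nc t) - Hh lam nc (a*t) * Hd lam nc t < 0" by linarith
  then have "sqrt lam * (a * (Hd lam nc (a*t) * Hh lam nc t) - Hh lam nc (a*t) * Hd lam nc t) < 0"
    using assms by (simp add: mult_pos_neg)
  then have "((a * (sqrt lam * Hd lam nc (a * t))) * Hh lam nc t - Hh lam nc (a*t) * (sqrt lam * Hd lam nc t))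
      / (Hh lam nc t * Hh lam nc t) < 0"
    using Hp by (intro divide_neg_pos) (auto simp: algebra_simps)
  with der show "\<exists>y. DERIV (\<lambda>R. Hh lam nc (a * R) / Hh lam nc R) t :> y \<and> y < 0" by blast
qed

lemma alpha_facts:
  assumes "gp > 0" "gm > 0"
  shows "0 < alpha gp gm" "alpha gp gm < 1" "(alpha gp gm)^2 = gm / (gp + gm)"
    "(gp + gm) * alpha gp gm = sqrt ((gp + gm) * gm)"
    "sqrt ((gp + gm) * gm) - gm > 0"
proof -
  show "0 < alpha gp gm" using assms by (simp add: alpha_def)
  show "alpha gp gm < 1" using assms by (simp add: alpha_def)
  show "(alpha gp gm)^2 = gm / (gp + gm)" using assms by (simp add: alpha_def)
  have "(gp+gm)*gm = (gp+gm)^2 * (gm/(gp+gm))" using assms by (simp add: field_simps power2_eq_square)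
  then have "sqrt ((gp+gm)*gm) = sqrt ((gp+gm)^2) * sqrt (gm/(gp+gm))"
    by (metis real_sqrt_mult)
  then have "sqrt ((gp+gm)*gm) = (gp+gm) * sqrt (gm/(gp+gm))" using assms
    by simp
  then show "(gp + gm) * alpha gp gm = sqrt ((gp + gm) * gm)" by (simp add: alpha_def)
  have "sqrt (gm * gm) < sqrt ((gp + gm) * gm)" using assms by (intro real_sqrt_less_mono) auto
  then show "sqrt ((gp + gm) * gm) - gm > 0" using assms by simp
qed

lemma Ffun_zero_iff:
  assumes "cB > 0" "lam \<ge> 0" "nc \<ge> 0" "R \<ge> 0"
  shows "Ffun lam nc gp gm cbar cB R = 0 \<longleftrightarrow>
    Hh lam nc ((1 - alpha gp gm) * R) / Hh lam nc R = cbar / cB"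
proof -
  have "Hh lam nc R > 0" using assms by (intro Hh_pos) auto
  then show ?thesis unfolding Ffun_eq using assms by (auto simp: field_simps)
qed

lemma root_mono:
  assumes "0 < lam" "0 < nc" "nc < 1" "gp > 0" "gm > 0" "cB1 > 0" "cB2 > 0"
    "R1 > 0" "R2 > 0" "Ffun lam nc gp gm cbar1 cB1 R1 = 0" "Ffun lam nc gp gm cbar2 cB2 R2 = 0"
    "cbar2 / cB2 < cbar1 / cB1"
  shows "R1 < R2"
proof (rule ccontr)
  assume "\<not> R1 < R2"
  then consider "R1 = R2" | "R2 < R1" by linarith
  then show False
  proof cases
    case 1 then show False using assms Ffun_zero_iff[of cB1 lam nc R1] Ffun_zero_iff[of cB2 lam nc R2] by auto
  next
    case 2
    have "Hh lam nc ((1 - alpha gp gm) * R1) / Hh lam nc R1 < Hh lam nc ((1 - alpha gp gm) * R2) / Hh lam nc R2"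
      using alpha_facts[OF assms(4,5)] assms 2 by (intro ratio_decr) auto
    then show False using assms Ffun_zero_iff[of cB1 lam nc R1] Ffun_zero_iff[of cB2 lam nc R2] by auto
  qed
qed

lemma root_ex1:
  assumes "0 < lam" "0 < nc" "nc < 1" "gp > 0" "gm > 0" "cbar > 0" "cB > cbar"
  shows "\<exists>!R. R > 0 \<and> Ffun lam nc gp gm cbar cB R = 0"
proof -
  define k where "k = cbar / cB"
  define al where "al = alpha gp gm"
  define s where "s = sqrt lam"
  have k: "0 < k" "k < 1" using assms by (auto simp: k_def)
  have al: "0 < al" "al < 1" using alpha_facts[OF assms(4,5)] by (auto simp: al_def)
  have s: "s > 0" using assms by (simp add: s_def)
  define R1 where "R1 = (ln (2 / k) + 1) / (s * al)"
  have lnp: "ln (2 / k) > 0" using k by simp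
  have R1: "R1 > 0" using lnp s al by (simp add: R1_def)
  have F: "Ffun lam nc gp gm cbar cB R = k * Hh lam nc R - Hh lam nc ((1 - al) * R)" for R
    by (simp add: Ffun_eq k_def al_def)
  have "s * al * R1 = ln (2 / k) + 1" using s al by (simp add: R1_def)
  then have e1: "exp (s * al * R1) > 2 / k" using k
    by (metis exp_less_cancel_iff exp_ln less_add_one zero_less_divide_iff zero_less_numeral)
  have eR: "exp (s * R1) = exp (s * ((1 - al) * R1)) * exp (s * al * R1)"
    by (simp add: algebra_simps flip: exp_add)
  have h1: "Hh lam nc R1 \<ge> exp (s * R1) / 2"
  proof -
    have "cosh (s * R1) \<ge> exp (s * R1) / 2" by (simp add: cosh_field_def)
    moreover have "sqrt nc * sinh (s * R1) \<ge> 0" using s R1 assms by simp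
    ultimately show ?thesis by (simp add: Hh_def s_def)
  qed
  have h2: "Hh lam nc ((1 - al) * R1) \<le> exp (s * ((1 - al) * R1))"
  proof -
    have sn: "sinh (s * ((1 - al) * R1)) \<ge> 0" using s R1 al by simp
    have "sqrt nc \<le> 1" using assms by simp
    then have "sqrt nc * sinh (s * ((1 - al) * R1)) \<le> sinh (s * ((1 - al) * R1))"
      using sn mult_right_mono[of "sqrt nc" 1 "sinh (s * ((1 - al) * R1))"] by simp
    then show ?thesis by (simp add: Hh_def s_def flip: cosh_plus_sinh)
  qed
  have "k * Hh lam nc R1 \<ge> k * (exp (s * R1) / 2)" using h1 k by simp
  moreover have "k * (exp (s * R1) / 2) > exp (s * ((1 - al) * R1))"
  proof -
    have eq: "k * (exp (s * R1) / 2) = exp (s * ((1 - al) * R1)) * (k / 2 * exp (s * al * R1))"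
    proof -
      have gen: "\<And>A B. k * (A * B / 2) = A * (k / 2 * B)" by (simp add: field_simps)
      show ?thesis unfolding eR by (rule gen)
    qed
    have "k / 2 * exp (s * al * R1) > 1" using e1 k by (simp add: field_simps)
    then have "exp (s * ((1 - al) * R1)) * (k / 2 * exp (s * al * R1)) > exp (s * ((1 - al) * R1)) * 1"
      by (intro mult_strict_left_mono) auto
    then show ?thesis unfolding eq by simp
  qed
  ultimately have FR1: "Ffun lam nc gp gm cbar cB R1 > 0" using h2 F[of R1] by linarith
  have F0: "Ffun lam nc gp gm cbar cB 0 < 0" using F[of 0] k by simp
  have cont: "continuous_on {0..R1} (Ffun lam nc gp gm cbar cB)"
    unfolding Ffun_def by (intro continuous_intros)
  obtain R where R: "0 \<le> R" "R \<le> R1" "Ffun lam nc gp gm cbar cB R = 0"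
    using IVT'[of "Ffun lam nc gp gm cbar cB" 0 0 R1, OF _ _ _ cont] F0 FR1 R1 by auto
  have "R \<noteq> 0" using R F0 by auto
  with R have ex: "\<exists>R. R > 0 \<and> Ffun lam nc gp gm cbar cB R = 0" by (intro exI[of _ R]) auto
  show ?thesis
  proof (rule ex_ex1I[OF ex])
    fix x y assume x: "0 < x \<and> Ffun lam nc gp gm cbar cB x = 0" and y: "0 < y \<and> Ffun lam nc gp gm cbar cB y = 0"
    show "x = y"
    proof (rule ccontr)
      assume "x \<noteq> y"
      then consider "x < y" | "y < x" by linarith
      then show False
      proof cases
        case 1
        have "Hh lam nc ((1 - alpha gp gm) * y) / Hh lam nc y < Hh lam nc ((1 - alpha gp gm) * x) / Hh lam nc x"
          using alpha_facts[OF assms(4,5)] assms 1 x by (intro ratio_decr) auto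
        then show False using assms x y Ffun_zero_iff[of cB lam nc x] Ffun_zero_iff[of cB lam nc y] by auto
      next
        case 2
        have "Hh lam nc ((1 - alpha gp gm) * x) / Hh lam nc x < Hh lam nc ((1 - alpha gp gm) * y) / Hh lam nc y"
          using alpha_facts[OF assms(4,5)] assms 2 y by (intro ratio_decr) auto
        then show False using assms x y Ffun_zero_iff[of cB lam nc x] Ffun_zero_iff[of cB lam nc y] by auto
      qed
    qed
  qed
qed

lemma Gr_lt: "c < cbar \<Longrightarrow> Gr gp gm cbar c = - gm" by (simp add: Gr_def)
lemma Gr_gt: "c > cbar \<Longrightarrow> Gr gp gm cbar c = gp" by (simp add: Gr_def)

lemma cont_from_deriv:
  assumes "\<forall>x\<in>S. (f has_real_derivative df x) (at x within S)"
  shows "continuous_on S f"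
  unfolding continuous_on_eq_continuous_within using assms DERIV_continuous by blast

lemma necessity:
  assumes "lam > 0" "nc > 0" "nc < 1" "gp > 0" "gm > 0" "cbar > 0" "cB > cbar"
    and "monotone_TW lam nc gp gm cbar cB \<sigma> R"
  shows "R > 0 \<and> Ffun lam nc gp gm cbar cB R = 0 \<and> \<sigma> = R * (sqrt ((gp + gm) * gm) - gm)"
proof -
  obtain n c p where TW: "TW_vitro lam nc gp gm cbar cB \<sigma> R n c p"
    and nn: "\<forall>x. 0 \<le> n x \<and> 0 \<le> c x \<and> 0 \<le> p x"
    and mono: "\<forall>x\<le>R. \<forall>d. (c has_real_derivative d) (at x within {..R}) \<longrightarrow> 0 \<le> d"
    using assms(8) unfolding monotone_TW_def by blast
  note T = TW[unfolded TW_vitro_def]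
  have sig: "\<sigma> > 0" and R: "R > 0" and ncont: "continuous_on {..0} n"
    and nder: "\<forall>x\<le>0. c x \<noteq> cbar \<longrightarrow>
        (n has_real_derivative (- (n x * Gr gp gm cbar (c x)) / \<sigma>)) (at x within {..0})"
    and nR: "\<forall>x\<in>{0..R}. n x = 1" and cR: "c R = cB"
    and p0: "p 0 = 0" and pR: "p R = 0" and n0: "n 0 = 1"
    using T by blast+
  obtain dc where cder: "\<forall>x\<le>R. (c has_real_derivative dc x) (at x within {..R})"
    and dccont: "continuous_on {..R} dc"
    and cint: "\<forall>y x. y \<le> x \<and> x \<le> R \<longrightarrow>
              ((\<lambda>t. psi lam nc (n t) * c t) has_integral (dc x - dc y)) {y..x}"
    using T by blast
  obtain dp where pder: "\<forall>x\<in>{0..R}. (p has_real_derivative dp x) (at x within {0..R})"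
    and dpcont: "continuous_on {0..R} dp"
    and dpder: "\<forall>x\<in>{0<..<R}. c x \<noteq> cbar \<longrightarrow> (dp has_real_derivative (- Gr gp gm cbar (c x))) (at x)"
    and sigdp: "\<sigma> = - dp R" and dp0: "dp 0 = 0"
    using T by blast
  have dcnn: "\<And>x. x \<le> R \<Longrightarrow> 0 \<le> dc x" using mono cder by blast
  have ccont: "continuous_on {..R} c" by (rule cont_from_deriv[of _ _ dc]) (use cder in auto)
  have cderat: "DERIV c x :> dc x" if "a < x" "x < b" "b \<le> R" for x a b
    using cder that by (intro within_to_at[of c "dc x" x "{..R}" a b]) auto
  have cmono: "c x \<le> c y" if "x \<le> y" "y \<le> R" for x y
  proof (rule DERIV_nonneg_imp_increasing_open[OF that(1)])
    show "continuous_on {x..y} c" by (rule continuous_on_subset[OF ccont]) (use that in auto)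
    fix t assume "x < t" "t < y"
    then show "\<exists>d. DERIV c t :> d \<and> d \<ge> 0" using cderat[of x t y] dcnn[of t] that by auto
  qed
  have psi1: "psi lam nc 1 = lam" by (simp add: psi_def)
  have dcder_pos: "DERIV dc x :> lam * c x" if "0 < x" "x < R" for x
  proof (rule L5[of 0 R "\<lambda>t. psi lam nc (n t) * c t" dc])
    show "\<forall>y\<in>{0..R}. ((\<lambda>t. psi lam nc (n t) * c t) has_integral dc y - dc 0) {0..y}" using cint by auto
    show "\<forall>t\<in>{0..R}. psi lam nc (n t) * c t = lam * c t" using nR psi1 by auto
    show "continuous_on {0..R} (\<lambda>t. lam * c t)"
      using ccont by (intro continuous_intros) (auto elim: continuous_on_subset)
  qed (use that in auto)
  have cstrict: "c u < c v" if "0 \<le> u" "u < v" "v \<le> R" "0 < c u" for u v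
  proof -
    have contc: "continuous_on {u..v} c" by (rule continuous_on_subset[OF ccont]) (use that in auto)
    have difc: "c differentiable (at x)" if "u < x" "x < v" for x
      using cderat[of u x v] that \<open>v \<le> R\<close> unfolding real_differentiable_def by blast
    obtain l z where z: "u < z" "z < v" "DERIV c z :> l" "c v - c u = (v - u) * l"
      using MVT[OF \<open>u < v\<close> contc difc] by blast
    have l: "l = dc z" using DERIV_unique[OF z(3) cderat[of u z v]] z that by auto
    have contdc: "continuous_on {u..z} dc" by (rule continuous_on_subset[OF dccont]) (use that z in auto)
    have difdc: "dc differentiable (at x)" if "u < x" "x < z" for x
      using dcder_pos[of x] that z \<open>0 \<le> u\<close> \<open>v \<le> R\<close> unfolding real_differentiable_def by auto
    obtain l2 z2 where z2: "u < z2" "z2 < z" "DERIV dc z2 :> l2" "dc z - dc u = (z - u) * l2"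
      using MVT[OF z(1) contdc difdc] by blast
    have l2: "l2 = lam * c z2" using DERIV_unique[OF z2(3) dcder_pos[of z2]] z2 z that by auto
    have "c z2 \<ge> c u" using cmono[of u z2] z2 z that by auto
    then have "lam * c z2 > 0" using that assms by simp
    then have "(z - u) * l2 > 0" using z2 l2 by simp
    then have "dc z > 0" using z2 dcnn[of u] that z by linarith
    then have "(v - u) * l > 0" using z l that by simp
    then show ?thesis using z by linarith
  qed
  obtain x0 where x0: "0 \<le> x0" "x0 \<le> R" "\<forall>x. 0 \<le> x \<and> x < x0 \<longrightarrow> c x < cbar"
    "\<forall>x. x0 < x \<and> x \<le> R \<longrightarrow> cbar < c x" "0 < x0 \<longrightarrow> c x0 = cbar"
  proof (cases "c 0 > cbar")
    case True
    show ?thesis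
    proof (rule that[of 0])
      show "\<forall>x. 0 < x \<and> x \<le> R \<longrightarrow> cbar < c x"
      proof (intro allI impI)
        fix x assume "0 < x \<and> x \<le> R"
        then show "cbar < c x" using True cmono[of 0 x] by auto
      qed
    qed (use R in auto)
  next
    case False
    obtain x1 where x1: "0 \<le> x1" "x1 \<le> R" "c x1 = cbar"
    proof -
      have "continuous_on {0..R} c" by (rule continuous_on_subset[OF ccont]) auto
      then show ?thesis using IVT'[of c 0 cbar R] False cR assms R that by auto
    qed
    show ?thesis
    proof (rule that[of x1])
      show "\<forall>x. x1 < x \<and> x \<le> R \<longrightarrow> cbar < c x" using cstrict[of x1] x1 assms by auto
      show "\<forall>x. 0 \<le> x \<and> x < x1 \<longrightarrow> c x < cbar"
      proof (intro allI impI)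
        fix x assume x: "0 \<le> x \<and> x < x1"
        have "c x \<le> cbar" using cmono[of x x1] x x1 by auto
        moreover have "c x \<noteq> cbar" using cstrict[of x x1] x x1 assms by auto
        ultimately show "c x < cbar" by simp
      qed
    qed (use x1 in auto)
  qed
  have dpA: "dp x = gm * x" if "0 \<le> x" "x \<le> x0" for x
  proof -
    have "(\<lambda>t. dp t - gm * t) x = (\<lambda>t. dp t - gm * t) 0"
    proof (rule const_deriv0[OF that(1)])
      show "continuous_on {0..x} (\<lambda>t. dp t - gm * t)"
        using dpcont that x0 by (intro continuous_intros) (auto elim: continuous_on_subset)
      fix t assume t: "0 < t" "t < x"
      then have ct: "c t < cbar" using x0 that by auto
      have "DERIV dp t :> - Gr gp gm cbar (c t)"
        by (rule dpder[rule_format]) (use t that x0(1,2) ct in auto)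
      then have "DERIV dp t :> gm" using Gr_lt[OF ct, of gp gm] by simp
      then show "DERIV (\<lambda>t. dp t - gm * t) t :> 0" by (auto intro!: derivative_eq_intros)
    qed
    then show ?thesis using dp0 by simp
  qed
  have dpB: "dp x = dp x0 - gp * (x - x0)" if "x0 \<le> x" "x \<le> R" for x
  proof -
    have "(\<lambda>t. dp t + gp * t) x = (\<lambda>t. dp t + gp * t) x0"
    proof (rule const_deriv0[OF that(1)])
      show "continuous_on {x0..x} (\<lambda>t. dp t + gp * t)"
        using dpcont that x0 by (intro continuous_intros) (auto elim: continuous_on_subset)
      fix t assume t: "x0 < t" "t < x"
      then have ct: "c t > cbar" using x0 that by auto
      have "DERIV dp t :> - Gr gp gm cbar (c t)"
        by (rule dpder[rule_format]) (use t that x0(1,2) ct in auto)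
      then have "DERIV dp t :> - gp" using Gr_gt[OF ct, of gp gm] by simp
      then show "DERIV (\<lambda>t. dp t + gp * t) t :> 0" by (auto intro!: derivative_eq_intros)
    qed
    then show ?thesis by (simp add: algebra_simps)
  qed
  have pcont: "continuous_on {0..R} p" by (rule cont_from_deriv[of _ _ dp]) (use pder in auto)
  have pderat: "DERIV p x :> dp x" if "0 < x" "x < R" for x
    using pder that by (intro within_to_at[of p "dp x" x "{0..R}" 0 R]) auto
  have px0: "p x0 = gm * x0^2 / 2"
  proof -
    have "(\<lambda>t. p t - gm * t^2 / 2) x0 = (\<lambda>t. p t - gm * t^2 / 2) 0"
    proof (rule const_deriv0[OF x0(1)])
      show "continuous_on {0..x0} (\<lambda>t. p t - gm * t^2 / 2)"
        using pcont x0 by (intro continuous_intros) (auto elim: continuous_on_subset)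
      fix t assume t: "0 < t" "t < x0"
      then have "DERIV p t :> gm * t" using pderat[of t] dpA[of t] x0 by auto
      then show "DERIV (\<lambda>t. p t - gm * t^2 / 2) t :> 0" by (auto intro!: derivative_eq_intros)
    qed
    then show ?thesis using p0 by simp
  qed
  have pRx: "p R - (dp x0 * R - gp * (R - x0)^2 / 2) = p x0 - dp x0 * x0"
  proof -
    have "(\<lambda>t. p t - (dp x0 * t - gp * (t - x0)^2 / 2)) R = (\<lambda>t. p t - (dp x0 * t - gp * (t - x0)^2 / 2)) x0"
    proof (rule const_deriv0[OF x0(2)])
      show "continuous_on {x0..R} (\<lambda>t. p t - (dp x0 * t - gp * (t - x0)^2 / 2))"
        using pcont x0 by (intro continuous_intros) (auto elim: continuous_on_subset)
      fix t assume t: "x0 < t" "t < R"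
      then have "DERIV p t :> dp x0 - gp * (t - x0)" using pderat[of t] dpB[of t] x0 by auto
      then show "DERIV (\<lambda>t. p t - (dp x0 * t - gp * (t - x0)^2 / 2)) t :> 0"
        by (auto intro!: derivative_eq_intros)
    qed
    then show ?thesis by simp
  qed
  define al where "al = alpha gp gm"
  have al: "0 < al" "al < 1" "al^2 = gm / (gp + gm)" "(gp + gm) * al = sqrt ((gp + gm) * gm)"
    using alpha_facts[OF assms(4,5)] by (auto simp: al_def)
  have dpx0: "dp x0 = gm * x0" using dpA x0 by auto
  have h: "gm * x0^2 + gp * (R - x0)^2 = 2 * gm * x0 * R"
    using pRx unfolding dpx0 px0 pR by (simp add: field_simps, algebra)
  have eq1: "gm * R^2 = (gp + gm) * (R - x0)^2"
    using h by algebra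
  have "(R - x0)^2 = gm * R^2 / (gp + gm)" using eq1 assms by (simp add: field_simps)
  also have "\<dots> = al^2 * R^2" using al(3) by simp
  finally have "(R - x0)^2 = (al * R)^2" by (simp add: power_mult_distrib)
  then have Rx0: "R - x0 = al * R" using x0 al R by (simp add: power2_eq_iff_nonneg)
  then have x0eq: "x0 = (1 - al) * R" by (simp add: algebra_simps)
  have x0pos: "x0 > 0" using x0eq al R by simp
  have sigma_eq: "\<sigma> = R * (sqrt ((gp + gm) * gm) - gm)"
  proof -
    have "\<sigma> = gp * (R - x0) - gm * x0" using sigdp dpB[of R] dpx0 x0 by simp
    also have "\<dots> = R * ((gp + gm) * al - gm)" unfolding x0eq by (simp add: algebra_simps)
    finally show ?thesis using al by simp
  qed
  have cx0: "c x0 = cbar" using x0 x0pos by auto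
  have cneg: "c x < cbar" if "x \<le> 0" for x
    using cmono[of x 0] that R x0(3) x0pos by fastforce
  define k where "k = gm / \<sigma>"
  have k: "k > 0" using sig assms by (simp add: k_def)
  have nneg: "n x = exp (k * x)" if "x < 0" for x
  proof -
    have "n 0 = n x * exp (k * (0 - x))"
    proof (rule exp_ode)
      show "x \<le> 0" using that by simp
      show "continuous_on {x..0} n" by (rule continuous_on_subset[OF ncont]) auto
      fix t assume t: "x < t" "t < 0"
      have "(n has_real_derivative (- (n t * Gr gp gm cbar (c t)) / \<sigma>)) (at t within {..0})"
        using nder cneg[of t] t by auto
      then have "(n has_real_derivative k * n t) (at t within {..0})"
        using Gr_lt[OF cneg[of t], of gp gm] t by (simp add: k_def mult.commute)
      then show "DERIV n t :> k * n t" using t by (intro within_to_at[of n _ t "{..0}" x 0]) auto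
    qed
    then have "1 = n x * exp (- (k * x))" using n0 by simp
    then show ?thesis by (simp add: exp_minus field_simps)
  qed
  have psineg: "psi lam nc (n x) = lam * nc" if "x < 0" for x
  proof -
    have "n x < 1" using nneg[OF that] k that by (simp add: mult_pos_neg)
    moreover have "0 < n x" using nneg[OF that] by simp
    ultimately show ?thesis by (simp add: psi_def)
  qed
  have dcder_neg: "DERIV dc x :> lam * nc * c x" if "x < 0" for x
  proof (rule L5[of "x - 1" "x / 2" "\<lambda>t. psi lam nc (n t) * c t" dc])
    show "\<forall>y\<in>{x - 1..x / 2}. ((\<lambda>t. psi lam nc (n t) * c t) has_integral dc y - dc (x - 1)) {x - 1..y}"
      using cint that R by auto
    show "\<forall>t\<in>{x - 1..x / 2}. psi lam nc (n t) * c t = lam * nc * c t" using psineg that by auto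
    show "continuous_on {x - 1..x / 2} (\<lambda>t. lam * nc * c t)"
      using ccont that R by (intro continuous_intros) (auto elim: continuous_on_subset)
  qed (use that in auto)
  have cderneg: "DERIV c x :> dc x" if "x < 0" for x
    using cderat[of "x - 1" x "x / 2"] that R by auto
  define mu where "mu = sqrt (lam * nc)"
  have mu: "mu > 0" "mu * mu = lam * nc" using assms by (auto simp: mu_def)
  define U where "U = (\<lambda>t. dc t + mu * c t)"
  define W where "W = (\<lambda>t. dc t - mu * c t)"
  have contUW: "continuous_on {x..0} U" "continuous_on {x..0} W" if "x \<le> 0" for x
    unfolding U_def W_def using ccont dccont R that
    by (auto intro!: continuous_intros elim: continuous_on_subset)
  have Ux: "U 0 = U x * exp (mu * (0 - x))" if "x < 0" for x
  proof (rule exp_ode)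
    show "x \<le> 0" using that by simp
    show "continuous_on {x..0} U" using contUW that by simp
    fix t assume t: "x < t" "t < 0"
    have "DERIV U t :> lam * nc * c t + mu * dc t" unfolding U_def
      using dcder_neg[of t] cderneg[of t] t by (auto intro!: derivative_eq_intros)
    moreover have "mu * U t = lam * nc * c t + mu * dc t" unfolding U_def
      by (simp only: mu(2)[symmetric]) (simp add: algebra_simps)
    ultimately show "DERIV U t :> mu * U t" by simp
  qed
  have Wx: "W 0 = W x * exp ((- mu) * (0 - x))" if "x < 0" for x
  proof (rule exp_ode)
    show "x \<le> 0" using that by simp
    show "continuous_on {x..0} W" using contUW that by simp
    fix t assume t: "x < t" "t < 0"
    have "DERIV W t :> lam * nc * c t - mu * dc t" unfolding W_def
      using dcder_neg[of t] cderneg[of t] t by (auto intro!: derivative_eq_intros)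
    moreover have "(- mu) * W t = lam * nc * c t - mu * dc t" unfolding W_def
      by (simp only: mu(2)[symmetric]) (simp add: algebra_simps)
    ultimately show "DERIV W t :> (- mu) * W t" by simp
  qed
  have W0: "W 0 = 0"
  proof (rule ccontr)
    assume W0: "W 0 \<noteq> 0"
    define x1 where "x1 = - (\<bar>U 0\<bar> / \<bar>W 0\<bar> + 2 * mu) / (2 * mu)"
    have "\<bar>U 0\<bar> / \<bar>W 0\<bar> + 2 * mu > 0" using mu by (intro add_nonneg_pos) auto
    then have x1: "x1 < 0" using mu unfolding x1_def by (intro divide_neg_pos) auto
    define E where "E = exp (mu * x1)"
    have E: "0 < E" "E \<le> 1" using x1 mu by (auto simp: E_def mult_pos_neg less_imp_le)
    have U1: "U 0 = U x1 / E" using Ux[OF x1] by (simp add: E_def exp_minus field_simps)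
    have W1: "W 0 = W x1 * E" using Wx[OF x1] by (simp add: E_def)
    have "U x1 - W x1 = 2 * mu * c x1" "U x1 + W x1 = 2 * dc x1" by (auto simp: U_def W_def)
    moreover have "2 * mu * c x1 \<ge> 0" "2 * dc x1 \<ge> 0" using nn dcnn[of x1] mu x1 R by auto
    ultimately have absW: "\<bar>W x1\<bar> \<le> U x1" by linarith
    have "\<bar>W 0\<bar> \<le> U x1 * E" using W1 absW E by (simp add: abs_mult mult_right_mono)
    also have "\<dots> = U 0 * (E * E)" using U1 E by (simp add: field_simps)
    also have "\<dots> \<le> \<bar>U 0\<bar> * (E * E)" using E by (simp add: mult_right_mono)
    finally have A: "\<bar>W 0\<bar> \<le> \<bar>U 0\<bar> * (E * E)" .
    have "E * E = exp (2 * mu * x1)" by (simp add: E_def flip: exp_add)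
    have "1 + (- 2 * mu * x1) \<le> exp (- 2 * mu * x1)" by (rule exp_ge_add_one_self)
    moreover have "1 + (- 2 * mu * x1) = \<bar>U 0\<bar> / \<bar>W 0\<bar> + 2 * mu + 1" using mu by (simp add: x1_def)
    ultimately have B: "\<bar>U 0\<bar> / \<bar>W 0\<bar> < exp (- 2 * mu * x1)" using mu by linarith
    have X: "exp (- 2 * mu * x1) * (E * E) = 1"
      by (simp add: E_def flip: exp_add)
    have "\<bar>U 0\<bar> < exp (- 2 * mu * x1) * \<bar>W 0\<bar>" using B W0 by (simp add: divide_less_eq)
    then have "\<bar>U 0\<bar> * (E * E) < exp (- 2 * mu * x1) * \<bar>W 0\<bar> * (E * E)"
      using E by (intro mult_strict_right_mono) auto
    also have "\<dots> = \<bar>W 0\<bar> * (exp (- 2 * mu * x1) * (E * E))" by (simp only: mult_ac)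
    finally have "\<bar>U 0\<bar> * (E * E) < \<bar>W 0\<bar>" unfolding X by simp
    with A show False by simp
  qed
  define sl where "sl = sqrt lam"
  define q where "q = sqrt nc"
  have sl: "sl > 0" using assms by (simp add: sl_def)
  have muq: "mu = sl * q" by (simp add: mu_def sl_def q_def real_sqrt_mult)
  define c0 where "c0 = c 0"
  have dc0: "dc 0 = sl * q * c0" using W0 muq by (simp add: W_def c0_def)
  define U2 where "U2 = (\<lambda>t. dc t + sl * c t)"
  define W2 where "W2 = (\<lambda>t. dc t - sl * c t)"
  have slsq: "sl * sl = lam" using assms by (simp add: sl_def)
  have cpos: "c x = c0 * Hh lam nc x" if "0 \<le> x" "x \<le> R" for x
  proof -
    have contUW2: "continuous_on {0..x} U2" "continuous_on {0..x} W2"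
      unfolding U2_def W2_def using ccont dccont that
      by (auto intro!: continuous_intros elim: continuous_on_subset)
    have U2x: "U2 x = U2 0 * exp (sl * (x - 0))"
    proof (rule exp_ode[OF that(1) contUW2(1)])
      fix t assume t: "0 < t" "t < x"
      have "DERIV U2 t :> lam * c t + sl * dc t" unfolding U2_def
        using dcder_pos[of t] cderat[of 0 t x] t that by (auto intro!: derivative_eq_intros)
      moreover have "sl * U2 t = lam * c t + sl * dc t" unfolding U2_def
        by (simp only: slsq[symmetric]) (simp add: algebra_simps)
      ultimately show "DERIV U2 t :> sl * U2 t" by simp
    qed
    have W2x: "W2 x = W2 0 * exp ((- sl) * (x - 0))"
    proof (rule exp_ode[OF that(1) contUW2(2)])
      fix t assume t: "0 < t" "t < x"
      have "DERIV W2 t :> lam * c t - sl * dc t" unfolding W2_def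
        using dcder_pos[of t] cderat[of 0 t x] t that by (auto intro!: derivative_eq_intros)
      moreover have "(- sl) * W2 t = lam * c t - sl * dc t" unfolding W2_def
        by (simp only: slsq[symmetric]) (simp add: algebra_simps)
      ultimately show "DERIV W2 t :> (- sl) * W2 t" by simp
    qed
    have "2 * sl * c x = U2 x - W2 x" by (simp add: U2_def W2_def)
    also have "\<dots> = (sl * q * c0 + sl * c0) * exp (sl * x) - (sl * q * c0 - sl * c0) * exp (- (sl * x))"
      unfolding U2x W2x by (simp add: U2_def W2_def dc0 c0_def)
    also have "\<dots> = 2 * sl * (c0 * Hh lam nc x)"
      by (simp add: Hh_def sl_def[symmetric] q_def[symmetric] cosh_field_def sinh_field_def field_simps)
    finally show ?thesis using sl by simp
  qed
  have HR: "Hh lam nc R > 0" using R assms by (intro Hh_pos) auto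
  have cBeq: "cB = c0 * Hh lam nc R" using cpos[of R] cR R by simp
  have cbareq: "cbar = c0 * Hh lam nc ((1 - alpha gp gm) * R)"
    using cpos[of x0] cx0 x0 x0eq by (simp add: al_def)
  have "c0 \<noteq> 0" using cBeq assms by auto
  then have "Ffun lam nc gp gm cbar cB R = 0"
    unfolding Ffun_eq cBeq cbareq using HR by (simp add: field_simps)
  then show ?thesis using R sigma_eq by simp
qed

lemma Hd_deriv: "DERIV (Hd lam nc) t :> sqrt lam * Hh lam nc t"
  unfolding Hh_def Hd_def by (auto intro!: derivative_eq_intros simp: algebra_simps)

lemma Hh_mono:
  assumes "0 < lam" "0 \<le> nc" "0 \<le> u" "u < v"
  shows "Hh lam nc u < Hh lam nc v"
proof -
  have "cosh (sqrt lam * u) < cosh (sqrt lam * v)"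
    using assms by (subst cosh_real_nonneg_less_iff) auto
  moreover have "sinh (sqrt lam * u) \<le> sinh (sqrt lam * v)" using assms by simp
  then have "sqrt nc * sinh (sqrt lam * u) \<le> sqrt nc * sinh (sqrt lam * v)"
    using assms by (intro mult_left_mono) auto
  ultimately show ?thesis by (simp add: Hh_def)
qed

lemma existence:
  assumes "lam > 0" "nc > 0" "nc < 1" "gp > 0" "gm > 0" "cbar > 0" "cB > cbar"
    and R: "R > 0" and FR: "Ffun lam nc gp gm cbar cB R = 0"
  shows "monotone_TW lam nc gp gm cbar cB (R * (sqrt ((gp + gm) * gm) - gm)) R"
proof -
  define al where "al = alpha gp gm"
  have al: "0 < al" "al < 1" "al^2 = gm / (gp + gm)" "(gp + gm) * al = sqrt ((gp + gm) * gm)"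
    "sqrt ((gp + gm) * gm) - gm > 0"
    using alpha_facts[OF assms(4,5)] by (auto simp: al_def)
  define \<sigma> where "\<sigma> = R * (sqrt ((gp + gm) * gm) - gm)"
  have sig: "\<sigma> > 0" using R al by (simp add: \<sigma>_def)
  define x0 where "x0 = (1 - al) * R"
  have x0: "0 < x0" "x0 < R" using al R by (auto simp: x0_def)
  define k where "k = gm / \<sigma>"
  have k: "k > 0" using sig assms by (simp add: k_def)
  define sl where "sl = sqrt lam"
  define q where "q = sqrt nc"
  define mu where "mu = sl * q"
  have sl: "sl > 0" "sl * sl = lam" using assms by (auto simp: sl_def)
  have q: "q > 0" "q * q = nc" using assms by (auto simp: q_def)
  have mu: "mu > 0" "mu * mu = lam * nc" using sl q by (auto simp: mu_def algebra_simps)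
  have HR: "Hh lam nc R > 0" using R assms by (intro Hh_pos) auto
  define c0 where "c0 = cB / Hh lam nc R"
  have c0: "c0 > 0" using HR assms by (simp add: c0_def)
  have cBeq: "c0 * Hh lam nc R = cB" using HR by (simp add: c0_def)
  have cbareq: "c0 * Hh lam nc x0 = cbar"
  proof -
    have "cbar / cB * Hh lam nc R = Hh lam nc x0" using FR unfolding Ffun_eq by (simp add: x0_def al_def)
    then show ?thesis using HR assms by (simp add: c0_def field_simps)
  qed
  have Hx0: "Hh lam nc 0 < Hh lam nc x0" using x0 assms by (intro Hh_mono) auto
  have c0cbar: "c0 < cbar" using Hx0 c0 cbareq by (metis Hh_0 mult.right_neutral mult_strict_left_mono)
  define n where "n = (\<lambda>x::real. if x \<le> 0 then exp (k * x) else if x \<le> R then 1 else (0::real))"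
  define cc where "cc = (\<lambda>x. if x \<le> 0 then c0 * exp (mu * x) else c0 * Hh lam nc x)"
  define c where "c = (\<lambda>x. if x \<le> R then cc x else cB)"
  define dc where "dc = (\<lambda>x. if x \<le> 0 then c0 * mu * exp (mu * x) else c0 * (sl * Hd lam nc x))"
  define PP where "PP = (\<lambda>x. if x \<le> x0 then gm * x^2 / 2 else gm * x^2 / 2 - (gm + gp) / 2 * (x - x0)^2)"
  define p where "p = (\<lambda>x. if 0 \<le> x \<and> x \<le> R then PP x else 0)"
  define dp where "dp = (\<lambda>x. if x \<le> x0 then gm * x else gm * x - (gm + gp) * (x - x0))"
  have Hd0: "Hd lam nc 0 = q" by (simp add: Hd_def q_def)
  have ccder: "DERIV cc x :> dc x" for x
  proof -
    have d1: "DERIV (\<lambda>x. c0 * exp (mu * x)) x :> c0 * mu * exp (mu * x)" for x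
      by (auto intro!: derivative_eq_intros)
    have d2: "DERIV (\<lambda>x. c0 * Hh lam nc x) x :> c0 * (sl * Hd lam nc x)" for x
      using Hh_deriv[of lam nc x] by (auto intro!: derivative_eq_intros simp: sl_def)
    consider "x < 0" | "x = 0" | "x > 0" by linarith
    then show ?thesis
    proof cases
      case 1 then show ?thesis unfolding cc_def dc_def by (simp add: if_deriv_lt[OF d1])
    next
      case 3 then show ?thesis unfolding cc_def dc_def using if_deriv_gt[OF d2 3] by simp
    next
      case 2
      have "DERIV (\<lambda>x. c0 * Hh lam nc x) 0 :> c0 * mu * exp (mu * 0)"
        using d2[of 0] by (simp add: Hd0 mu_def algebra_simps)
      from if_deriv_eq[OF d1[of 0] this] 2 show ?thesis unfolding cc_def dc_def by simp
    qed
  qed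
  have dcneg: "DERIV dc t :> psi lam nc (n t) * c t" if "t < 0" for t
  proof -
    have d: "DERIV (\<lambda>x. c0 * mu * exp (mu * x)) t :> c0 * mu * (exp (mu * t) * mu)"
      by (auto intro!: derivative_eq_intros)
    have D: "DERIV dc t :> c0 * mu * (exp (mu * t) * mu)"
      unfolding dc_def by (rule if_deriv_lt[OF d that])
    moreover have "n t = exp (k * t)" "exp (k * t) < 1" using that k by (auto simp: n_def mult_pos_neg)
    moreover have "psi lam nc (exp (k * t)) = lam * nc" using \<open>exp (k * t) < 1\<close> k that by (simp add: psi_def)
    moreover have "c t = c0 * exp (mu * t)" using that R by (simp add: c_def cc_def)
    ultimately have e: "psi lam nc (n t) * c t = (mu * mu) * (c0 * exp (mu * t))" using mu by simp
    have e2: "c0 * mu * (exp (mu * t) * mu) = (mu * mu) * (c0 * exp (mu * t))" by (simp only: mult_ac)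
    show ?thesis unfolding e using D e2 by simp
  qed
  have dcpos: "DERIV dc t :> psi lam nc (n t) * c t" if "0 < t" "t \<le> R" for t
  proof -
    have d: "DERIV (\<lambda>x. c0 * (sl * Hd lam nc x)) t :> c0 * (sl * (sl * Hh lam nc t))"
      using Hd_deriv[of lam nc t] by (auto intro!: derivative_eq_intros simp: sl_def)
    have "DERIV dc t :> c0 * (sl * (sl * Hh lam nc t))"
      unfolding dc_def by (rule if_deriv_gt[OF d that(1)])
    moreover have "n t = 1" "c t = c0 * Hh lam nc t" using that by (auto simp: n_def c_def cc_def)
    moreover have "c0 * (sl * (sl * Hh lam nc t)) = (sl * sl) * (c0 * Hh lam nc t)" by (simp only: mult_ac)
    ultimately show ?thesis using sl(2) by (simp add: psi_def)
  qed
  have dccont: "continuous_on UNIV dc"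
  proof -
    have "continuous_on ({..0} \<union> {0..}) dc" unfolding dc_def
    proof (rule continuous_on_cases)
      show "continuous_on {..0} (\<lambda>x. c0 * mu * exp (mu * x))" by (intro continuous_intros)
      show "continuous_on {0..} (\<lambda>x. c0 * (sl * Hd lam nc x))" unfolding Hd_def by (intro continuous_intros)
      show "\<forall>x. x \<in> {..0} \<and> \<not> x \<le> 0 \<or> x \<in> {0..} \<and> x \<le> 0 \<longrightarrow>
          c0 * mu * exp (mu * x) = c0 * (sl * Hd lam nc x)"
        using Hd0 by (auto simp: mu_def)
    qed auto
    moreover have "{..0} \<union> {0..} = (UNIV :: real set)" by auto
    ultimately show ?thesis by simp
  qed
  have PPder: "DERIV PP x :> dp x" for x
  proof -
    have d1: "DERIV (\<lambda>x. gm * x^2 / 2) x :> gm * x" for x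
      by (auto intro!: derivative_eq_intros)
    have d2: "DERIV (\<lambda>x. gm * x^2 / 2 - (gm + gp) / 2 * (x - x0)^2) x :> gm * x - (gm + gp) * (x - x0)" for x
      by (auto intro!: derivative_eq_intros)
    consider "x < x0" | "x = x0" | "x > x0" by linarith
    then show ?thesis
    proof cases
      case 1 then show ?thesis unfolding PP_def dp_def by (simp add: if_deriv_lt[OF d1])
    next
      case 3 then show ?thesis unfolding PP_def dp_def using if_deriv_gt[OF d2 3] by simp
    next
      case 2
      have "DERIV (\<lambda>x. gm * x^2 / 2 - (gm + gp) / 2 * (x - x0)^2) x0 :> gm * x0"
        using d2[of x0] by simp
      from if_deriv_eq[OF d1[of x0] this] 2 show ?thesis unfolding PP_def dp_def by simp
    qed
  qed
  have cx0: "c x0 = cbar" using x0 cbareq by (simp add: c_def cc_def)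
  have clt: "c x < cbar" if "x < x0" for x
  proof (cases "x \<le> 0")
    case True
    then have "c x = c0 * exp (mu * x)" using R by (simp add: c_def cc_def)
    moreover have "exp (mu * x) \<le> 1" using True mu by (simp add: mult_nonneg_nonpos)
    moreover have "c0 * exp (mu * x) \<le> c0 * 1" using c0 \<open>exp (mu * x) \<le> 1\<close> by (intro mult_left_mono) auto
    ultimately show ?thesis using c0cbar by simp
  next
    case False
    then have "c x = c0 * Hh lam nc x" using that x0 by (simp add: c_def cc_def)
    moreover have "Hh lam nc x < Hh lam nc x0" using False that assms by (intro Hh_mono) auto
    then have "c0 * Hh lam nc x < c0 * Hh lam nc x0" using c0 by simp
    ultimately show ?thesis using cbareq by simp
  qed
  have cgt: "c x > cbar" if "x0 < x" "x \<le> R" for x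
  proof -
    have "c x = c0 * Hh lam nc x" using that x0 by (simp add: c_def cc_def)
    moreover have "Hh lam nc x0 < Hh lam nc x" using that x0 assms by (intro Hh_mono) auto
    then have "c0 * Hh lam nc x0 < c0 * Hh lam nc x" using c0 by simp
    ultimately show ?thesis using cbareq by simp
  qed
  have pnn: "0 \<le> p x" for x
  proof (cases "0 \<le> x \<and> x \<le> R")
    case True
    show ?thesis
    proof (cases "x \<le> x0")
      case True then show ?thesis using \<open>0 \<le> x \<and> x \<le> R\<close> assms by (simp add: p_def PP_def)
    next
      case False
      have m: "(1 - al) * x \<le> (1 - al) * R" using \<open>0 \<le> x \<and> x \<le> R\<close> al
        by (intro mult_left_mono) auto
      have a: "0 \<le> x - x0" "x - x0 \<le> al * x" using False m
        by (auto simp: x0_def algebra_simps)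
      then have "(x - x0)^2 \<le> (al * x)^2" by (intro power_mono) auto
      then have "(gm + gp) * (x - x0)^2 \<le> (gm + gp) * (al^2 * x^2)" using assms
        by (simp add: power_mult_distrib)
      also have "\<dots> = gm * x^2" using al(3) assms by (simp add: add.commute)
      finally show ?thesis using False True by (simp add: p_def PP_def)
    qed
  qed (auto simp: p_def)
  have cder: "(c has_real_derivative dc x) (at x within {..R})" if x: "x \<le> R" for x
  proof -
    have "(cc has_real_derivative dc x) (at x within {..R})" using ccder DERIV_subset by blast
    then show "(c has_real_derivative dc x) (at x within {..R})"
      by (rule has_field_derivative_transform_within[where d=1]) (use x in \<open>auto simp: c_def\<close>)
  qed
  have TW: "TW_vitro lam nc gp gm cbar cB \<sigma> R n c p"
    unfolding TW_vitro_def
  proof (intro conjI)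
    show "\<sigma> > 0" "R > 0" using sig R by auto
    show "\<forall>x. n x \<le> 1" using k by (auto simp: n_def mult_nonneg_nonpos)
    show "continuous_on {..0} n"
      by (rule continuous_on_eq[of _ "\<lambda>x. exp (k * x)"]) (auto intro!: continuous_intros simp: n_def)
    show "\<forall>x\<le>0. c x \<noteq> cbar \<longrightarrow>
        (n has_real_derivative - (n x * Gr gp gm cbar (c x)) / \<sigma>) (at x within {..0})"
    proof (intro allI impI)
      fix x :: real assume x: "x \<le> 0"
      have "c x < cbar" using clt x x0 by auto
      then have eq: "- (n x * Gr gp gm cbar (c x)) / \<sigma> = k * exp (k * x)"
        using x by (simp add: Gr_lt n_def k_def)
      have "((\<lambda>x. exp (k * x)) has_real_derivative k * exp (k * x)) (at x within {..0})"
        by (auto intro!: derivative_eq_intros)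
      then show "(n has_real_derivative - (n x * Gr gp gm cbar (c x)) / \<sigma>) (at x within {..0})"
        unfolding eq by (rule has_field_derivative_transform_within[where d=1]) (use x in \<open>auto simp: n_def\<close>)
    qed
    show "\<forall>x\<in>{0..R}. n x = 1" "\<forall>x>R. n x = 0" using R by (auto simp: n_def)
    show "\<exists>dc. (\<forall>x\<le>R. (c has_real_derivative dc x) (at x within {..R})) \<and>
           continuous_on {..R} dc \<and>
           (\<forall>y x. y \<le> x \<and> x \<le> R \<longrightarrow>
              ((\<lambda>t. psi lam nc (n t) * c t) has_integral (dc x - dc y)) {y..x})"
    proof (intro exI[of _ dc] conjI allI impI)
      fix x :: real assume x: "x \<le> R"
      have "(cc has_real_derivative dc x) (at x within {..R})" using ccder DERIV_subset by blast
      then show "(c has_real_derivative dc x) (at x within {..R})"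
        by (rule has_field_derivative_transform_within[where d=1]) (use x in \<open>auto simp: c_def\<close>)
    next
      show "continuous_on {..R} dc" using dccont by (rule continuous_on_subset) auto
    next
      fix y x :: real assume yx: "y \<le> x \<and> x \<le> R"
      show "((\<lambda>t. psi lam nc (n t) * c t) has_integral (dc x - dc y)) {y..x}"
      proof (rule fundamental_theorem_of_calculus_interior_strong[of "{0}"])
        show "y \<le> x" using yx by simp
        show "continuous_on {y..x} dc" using dccont by (rule continuous_on_subset) auto
        fix t assume t: "t \<in> {y<..<x} - {0}"
        have "DERIV dc t :> psi lam nc (n t) * c t"
        proof (cases "t < 0")
          case True then show ?thesis using dcneg by blast
        next
          case False then show ?thesis using dcpos[of t] t yx by auto
        qed
        then show "(dc has_vector_derivative psi lam nc (n t) * c t) (at t)"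
          by (simp add: has_real_derivative_iff_has_vector_derivative)
      qed simp
    qed
    show "c R = cB" using R cBeq by (simp add: c_def cc_def)
    show "\<forall>x>R. c x = cB" by (simp add: c_def)
    show "bounded (c ` {..0})"
      unfolding bounded_iff
    proof (intro exI ballI)
      fix y assume "y \<in> c ` {..0}"
      then obtain x where x: "x \<le> 0" "y = c x" by auto
      then have "y = c0 * exp (mu * x)" using R by (simp add: c_def cc_def)
      moreover have "exp (mu * x) \<le> 1" using x mu by (simp add: mult_nonneg_nonpos)
      ultimately show "norm y \<le> c0" using c0 by (simp add: abs_mult mult_left_le_one_le)
    qed
    show "\<exists>dp. (\<forall>x\<in>{0..R}. (p has_real_derivative dp x) (at x within {0..R})) \<and>
           continuous_on {0..R} dp \<and>
           (\<forall>x\<in>{0<..<R}. c x \<noteq> cbar \<longrightarrow>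
              (dp has_real_derivative (- Gr gp gm cbar (c x))) (at x)) \<and>
           \<sigma> = - dp R \<and> dp 0 = 0"
    proof (intro exI[of _ dp] conjI ballI impI)
      fix x :: real assume x: "x \<in> {0..R}"
      have "(PP has_real_derivative dp x) (at x within {0..R})" using PPder DERIV_subset by blast
      then show "(p has_real_derivative dp x) (at x within {0..R})"
        by (rule has_field_derivative_transform_within[where d=1]) (use x in \<open>auto simp: p_def\<close>)
    next
      have "continuous_on ({..x0} \<union> {x0..}) dp" unfolding dp_def
        by (rule continuous_on_cases) (auto intro!: continuous_intros)
      then show "continuous_on {0..R} dp" by (rule continuous_on_subset) auto
    next
      fix x :: real assume x: "x \<in> {0<..<R}" and cx: "c x \<noteq> cbar"
      then have "x \<noteq> x0" using cx0 by auto
      then consider "x < x0" | "x > x0" by linarith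
      then show "(dp has_real_derivative (- Gr gp gm cbar (c x))) (at x)"
      proof cases
        case 1
        have d: "DERIV (\<lambda>x. gm * x) x :> gm" by (auto intro!: derivative_eq_intros)
        have "DERIV dp x :> gm" unfolding dp_def by (rule if_deriv_lt[OF d 1])
        then show ?thesis using Gr_lt[OF clt[OF 1], of gp gm] by simp
      next
        case 2
        have d: "DERIV (\<lambda>x. gm * x - (gm + gp) * (x - x0)) x :> - gp"
          by (auto intro!: derivative_eq_intros)
        have "DERIV dp x :> - gp" unfolding dp_def by (rule if_deriv_gt[OF d 2])
        then show ?thesis using Gr_gt[OF cgt[OF 2], of gp gm] x by simp
      qed
    next
      have "R - x0 = al * R" by (simp add: x0_def algebra_simps)
      then have "dp R = gm * R - (gm + gp) * (al * R)" using x0 by (simp add: dp_def)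
      also have "\<dots> = - \<sigma>" using al(4) by (simp add: \<sigma>_def algebra_simps)
      finally show "\<sigma> = - dp R" by simp
    next
      show "dp 0 = 0" using x0 by (simp add: dp_def)
    qed
    show "p 0 = 0" using R x0 by (simp add: p_def PP_def)
    show "p R = 0"
    proof -
      have "R - x0 = al * R" by (simp add: x0_def algebra_simps)
      then have "p R = gm * R^2 / 2 - (gm + gp) / 2 * (al * R)^2" using x0 R by (simp add: p_def PP_def)
      also have "\<dots> = R^2 / 2 * (gm - (gm + gp) * al^2)" by (simp add: power_mult_distrib algebra_simps)
      also have "\<dots> = 0" using al(3) assms by (simp add: add.commute)
      finally show ?thesis .
    qed
    show "\<forall>x. 0 \<le> p x" using pnn by blast
    show "\<forall>x. x \<notin> {0..R} \<longrightarrow> p x = 0" by (auto simp: p_def)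
    show "n 0 = 1" by (simp add: n_def)
  qed
  have dcnn: "0 \<le> dc x" for x
  proof (cases "x \<le> 0")
    case True then show ?thesis using c0 mu by (simp add: dc_def)
  next
    case False then show ?thesis using c0 sl Hd_pos[of x lam nc] assms by (simp add: dc_def)
  qed
  have cmono: "0 \<le> d" if "x \<le> R" "(c has_real_derivative d) (at x within {..R})" for x d
  proof -
    have "x islimpt {x - 1..R}" using that by (subst islimpt_Icc) auto
    then have "x islimpt {..R}" by (rule islimpt_subset) auto
    then have nb: "at x within {..R} \<noteq> bot" using trivial_limit_within by blast
    have "d = dc x"
      using vector_derivative_unique_within[OF nb] that(2) cder[OF that(1)]
      by (simp add: has_real_derivative_iff_has_vector_derivative)
    then show ?thesis using dcnn by simp
  qed
  have nnn: "0 \<le> n x" for x by (simp add: n_def)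
  have cnn: "0 \<le> c x" for x
    using c0 assms Hh_pos[of x lam nc] by (auto simp: c_def cc_def)
  show ?thesis unfolding monotone_TW_def \<sigma>_def[symmetric]
    using TW nnn cnn pnn cmono by blast
qed

theorem theorem3p2:
  fixes lam nc gp gm cbar cB :: real
  assumes "lam > 0" and "nc > 0" and "nc < 1" and "gp > 0" and "gm > 0"
    and "cbar > 0" and "cB > cbar"
  shows "(\<exists>!R. R > 0 \<and> Ffun lam nc gp gm cbar cB R = 0)
    \<and> (\<exists>!(\<sigma>, R). monotone_TW lam nc gp gm cbar cB \<sigma> R)
    \<and> (\<forall>\<sigma> R. monotone_TW lam nc gp gm cbar cB \<sigma> R \<longrightarrow>
          R > 0 \<and> Ffun lam nc gp gm cbar cB R = 0
          \<and> \<sigma> = R * (sqrt ((gp + gm) * gm) - gm))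
    \<and> (\<forall>cB' \<sigma> R \<sigma>' R'. cB < cB' \<longrightarrow> monotone_TW lam nc gp gm cbar cB \<sigma> R \<longrightarrow>
          monotone_TW lam nc gp gm cbar cB' \<sigma>' R' \<longrightarrow> \<sigma> < \<sigma>')
    \<and> (\<forall>cbar' \<sigma> R \<sigma>' R'. cbar < cbar' \<longrightarrow> cbar' < cB \<longrightarrow>
          monotone_TW lam nc gp gm cbar cB \<sigma> R \<longrightarrow>
          monotone_TW lam nc gp gm cbar' cB \<sigma>' R' \<longrightarrow> \<sigma>' < \<sigma>)"
proof (intro conjI)
  define K where "K = sqrt ((gp + gm) * gm) - gm"
  have K: "K > 0" using alpha_facts[OF assms(4,5)] by (simp add: K_def)
  show ex1: "\<exists>!R. R > 0 \<and> Ffun lam nc gp gm cbar cB R = 0" by (rule root_ex1[OF assms])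
  show nec: "\<forall>\<sigma> R. monotone_TW lam nc gp gm cbar cB \<sigma> R \<longrightarrow>
          R > 0 \<and> Ffun lam nc gp gm cbar cB R = 0 \<and> \<sigma> = R * (sqrt ((gp + gm) * gm) - gm)"
    using necessity[OF assms] by blast
  show "\<exists>!(\<sigma>, R). monotone_TW lam nc gp gm cbar cB \<sigma> R"
  proof -
    obtain R0 where R0: "R0 > 0" "Ffun lam nc gp gm cbar cB R0 = 0" using ex1 by blast
    have M: "monotone_TW lam nc gp gm cbar cB (R0 * K) R0"
      using existence[OF assms R0] by (simp add: K_def)
    show ?thesis
    proof (rule ex1I[of _ "(R0 * K, R0)"])
      show "case (R0 * K, R0) of (\<sigma>, R) \<Rightarrow> monotone_TW lam nc gp gm cbar cB \<sigma> R" using M by simp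
      fix y assume y: "case y of (\<sigma>, R) \<Rightarrow> monotone_TW lam nc gp gm cbar cB \<sigma> R"
      obtain \<sigma> R where yy: "y = (\<sigma>, R)" by (cases y)
      with y have "monotone_TW lam nc gp gm cbar cB \<sigma> R" by simp
      then have "R > 0" "Ffun lam nc gp gm cbar cB R = 0" "\<sigma> = R * K"
        using nec by (auto simp: K_def)
      moreover have "R = R0" using ex1 R0 \<open>R > 0\<close> \<open>Ffun lam nc gp gm cbar cB R = 0\<close> by blast
      ultimately show "y = (R0 * K, R0)" using yy by simp
    qed
  qed
  show "\<forall>cB' \<sigma> R \<sigma>' R'. cB < cB' \<longrightarrow> monotone_TW lam nc gp gm cbar cB \<sigma> R \<longrightarrow>
          monotone_TW lam nc gp gm cbar cB' \<sigma>' R' \<longrightarrow> \<sigma> < \<sigma>'"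
  proof (intro allI impI)
    fix cB' \<sigma> R \<sigma>' R'
    assume c: "cB < cB'" and M1: "monotone_TW lam nc gp gm cbar cB \<sigma> R"
      and M2: "monotone_TW lam nc gp gm cbar cB' \<sigma>' R'"
    have A: "R > 0" "Ffun lam nc gp gm cbar cB R = 0" "\<sigma> = R * K"
      using necessity[OF assms M1] by (auto simp: K_def)
    have B: "R' > 0" "Ffun lam nc gp gm cbar cB' R' = 0" "\<sigma>' = R' * K"
      using necessity[OF assms(1-6) _ M2] c assms by (auto simp: K_def)
    have "cbar / cB' < cbar / cB" using c assms by (intro divide_strict_left_mono) auto
    then have "R < R'" using root_mono[of lam nc gp gm cB cB' R R' cbar cbar] A B assms c by auto
    then show "\<sigma> < \<sigma>'" using A B K by simp
  qed
  show "\<forall>cbar' \<sigma> R \<sigma>' R'. cbar < cbar' \<longrightarrow> cbar' < cB \<longrightarrow>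
          monotone_TW lam nc gp gm cbar cB \<sigma> R \<longrightarrow>
          monotone_TW lam nc gp gm cbar' cB \<sigma>' R' \<longrightarrow> \<sigma>' < \<sigma>"
  proof (intro allI impI)
    fix cbar' \<sigma> R \<sigma>' R'
    assume c: "cbar < cbar'" "cbar' < cB" and M1: "monotone_TW lam nc gp gm cbar cB \<sigma> R"
      and M2: "monotone_TW lam nc gp gm cbar' cB \<sigma>' R'"
    have A: "R > 0" "Ffun lam nc gp gm cbar cB R = 0" "\<sigma> = R * K"
      using necessity[OF assms M1] by (auto simp: K_def)
    have B: "R' > 0" "Ffun lam nc gp gm cbar' cB R' = 0" "\<sigma>' = R' * K"
      using necessity[OF assms(1-5) _ c(2) M2] c assms by (auto simp: K_def)
    have "cbar / cB < cbar' / cB" using c assms by (intro divide_strict_right_mono) auto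
    then have "R' < R" using root_mono[of lam nc gp gm cB cB R' R cbar' cbar] A B assms c by auto
    then show "\<sigma>' < \<sigma>" using A B K by simp
  qed
qed

end
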